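(* Let $\mathcal{G}=(\mathcal{V},\mathcal{E})$ be a finite, connected, unweighted, undirected graph, let $u,v\in\mathcal{V}$, and let $k\ge 1$. Suppose the $k$-hop ego-graphs $\mathcal{B}(u,k)$ and $\mathcal{B}(v,k)$ are not isomorphic as rooted graphs, with roots $u$ and $v$ respectively. Let $m$ be the maximum of the numbers of edges of $\mathcal{B}(u,k)$ and $\mathcal{B}(v,k)$. Then there is a length $l=O(m)$ such that the distribution of anonymous paths of length-$l$ random walks started at $u$ differs from the distribution of anonymous paths of length-$l$ random walks started at $v$.
   Context: The $k$-hop ego-graph $\mathcal{B}(v,k)$ is the subgraph of $\mathcal{G}$ induced by all nodes at shortest-path distance at most $k$ from $v$; it is rooted at $v$. A random walk of length $l$ started at $v$ is a node sequence $w=(v_0,\dots,v_l)$ with $v_0=v$ and $P(v_{i+1}\mid v_0,\dots,v_i)=\mathbb{1}[(v_i,v_{i+1})\in\mathcal{E}]/D(v_i)$, where $D(v_i)$ is the degree of $v_i$. The anonymous path of $w$ is $\phi=(\gamma_0,\dots,\gamma_l)$ with $\gamma_i=\min\{j: v_j=v_i\}$. Thus $\gamma_i$ is the first position in $w$ at which node $v_i$ occurs. *)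

theory Defs
  imports Complex_Main
begin

definition simple_graph :: "'a set \<Rightarrow> ('a \<times> 'a) set \<Rightarrow> bool" where
  "simple_graph V E \<longleftrightarrow> E \<subseteq> V \<times> V \<and> (\<forall>x y. (x,y) \<in> E \<longrightarrow> (y,x) \<in> E) \<and> (\<forall>x. (x,x) \<notin> E)"

definition is_walk :: "('a \<times> 'a) set \<Rightarrow> 'a list \<Rightarrow> bool" where
  "is_walk E w \<longleftrightarrow> w \<noteq> [] \<and> (\<forall>i. Suc i < length w \<longrightarrow> (w!i, w!Suc i) \<in> E)"

definition connected_graph :: "'a set \<Rightarrow> ('a \<times> 'a) set \<Rightarrow> bool" where
  "connected_graph V E \<longleftrightarrow> (\<forall>x\<in>V. \<forall>y\<in>V. \<exists>w. is_walk E w \<and> hd w = x \<and> last w = y)"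

definition dist_le :: "('a \<times> 'a) set \<Rightarrow> 'a \<Rightarrow> 'a \<Rightarrow> nat \<Rightarrow> bool" where
  "dist_le E x y k \<longleftrightarrow> (\<exists>w. is_walk E w \<and> hd w = x \<and> last w = y \<and> length w \<le> Suc k)"

text \<open>Vertex set of the k-hop ego-graph B(v,k); the ego-graph is the subgraph induced by it.\<close>
definition ego_nodes :: "'a set \<Rightarrow> ('a \<times> 'a) set \<Rightarrow> 'a \<Rightarrow> nat \<Rightarrow> 'a set" where
  "ego_nodes V E v k = {x \<in> V. dist_le E v x k}"

definition induced_edge_count :: "('a \<times> 'a) set \<Rightarrow> 'a set \<Rightarrow> nat" where
  "induced_edge_count E B = card {{x, y} | x y. x \<in> B \<and> y \<in> B \<and> (x, y) \<in> E}"

definition rooted_iso :: "('a \<times> 'a) set \<Rightarrow> 'a set \<Rightarrow> 'a \<Rightarrow> 'a set \<Rightarrow> 'a \<Rightarrow> bool" where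
  "rooted_iso E A a B b \<longleftrightarrow> (\<exists>f. bij_betw f A B \<and> f a = b \<and>
      (\<forall>x\<in>A. \<forall>y\<in>A. (x, y) \<in> E \<longleftrightarrow> (f x, f y) \<in> E))"

definition degree :: "('a \<times> 'a) set \<Rightarrow> 'a \<Rightarrow> nat" where
  "degree E x = card {y. (x, y) \<in> E}"

definition walk_prob :: "('a \<times> 'a) set \<Rightarrow> 'a list \<Rightarrow> real" where
  "walk_prob E w = (\<Prod>i<length w - 1.
      (if (w!i, w!Suc i) \<in> E then 1 / real (degree E (w!i)) else 0))"

definition anon_path :: "'a list \<Rightarrow> nat list" where
  "anon_path w = map (\<lambda>i. LEAST j. w!j = w!i) [0..<length w]"

definition anon_dist :: "'a set \<Rightarrow> ('a \<times> 'a) set \<Rightarrow> 'a \<Rightarrow> nat \<Rightarrow> nat list \<Rightarrow> real" where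
  "anon_dist V E v l \<phi> = (\<Sum>w\<in>{w. length w = Suc l \<and> set w \<subseteq> V \<and> hd w = v}.
      (if anon_path w = \<phi> then walk_prob E w else 0))"

end

theory Submission
  imports Defs
begin


lemma succ_nth: "successively P xs \<longleftrightarrow> (\<forall>i. Suc i < length xs \<longrightarrow> P (xs!i) (xs!Suc i))"
proof (induction xs rule: induct_list012)
  case (3 x y xs)
  show ?case
  proof
    assume a: "successively P (x # y # xs)"
    then have h: "\<forall>i. Suc i < length (y # xs) \<longrightarrow> P ((y # xs) ! i) ((y # xs) ! Suc i)"
      using 3(2) by simp
    show "\<forall>i. Suc i < length (x # y # xs) \<longrightarrow> P ((x # y # xs) ! i) ((x # y # xs) ! Suc i)"
    proof (intro allI impI)
      fix i assume "Suc i < length (x # y # xs)"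
      then show "P ((x # y # xs) ! i) ((x # y # xs) ! Suc i)"
        using a h by (cases i) auto
    qed
  next
    assume h: "\<forall>i. Suc i < length (x # y # xs) \<longrightarrow> P ((x # y # xs) ! i) ((x # y # xs) ! Suc i)"
    have "P x y" using h[rule_format, of 0] by simp
    moreover have "\<forall>i. Suc i < length (y # xs) \<longrightarrow> P ((y # xs) ! i) ((y # xs) ! Suc i)"
      using h by (metis Suc_less_eq length_Cons nth_Cons_Suc)
    ultimately show "successively P (x # y # xs)" using 3(2) by simp
  qed
qed auto

lemma is_walk_succ: "is_walk E w \<longleftrightarrow> w \<noteq> [] \<and> successively (\<lambda>x y. (x,y)\<in>E) w"
  unfolding is_walk_def succ_nth by simp

fun cov :: "'a list \<Rightarrow> 'a set set" where
  "cov [] = {}" | "cov [x] = {}" | "cov (x#y#zs) = insert {x,y} (cov (y#zs))"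

lemma cov_append: "cov (xs @ a # ys) = cov (xs @ [a]) \<union> cov (a # ys)"
  by (induction xs rule: cov.induct) auto

lemma cov_finite: "finite (cov xs)"
  by (induction xs rule: cov.induct) auto

lemma cov_map: "cov (map f xs) = (\<lambda>e. f ` e) ` cov xs"
  by (induction xs rule: cov.induct) auto

lemma cov_edge: "successively R xs \<Longrightarrow> e \<in> cov xs \<Longrightarrow> \<exists>x y. e = {x,y} \<and> x \<in> set xs \<and> y \<in> set xs \<and> R x y"
  by (induction xs rule: cov.induct) auto

lemma insert_bounce:
  assumes "successively R (xs @ a # ys)" "R a b" "R b a"
  shows "successively R (xs @ a # b # a # ys)"
    "cov (xs @ a # b # a # ys) = insert {a,b} (cov (xs @ a # ys))"
    "set (xs @ a # b # a # ys) = insert b (set (xs @ a # ys))"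
    "hd (xs @ a # b # a # ys) = hd (xs @ a # ys)"
    "last (xs @ a # b # a # ys) = last (xs @ a # ys)"
    "length (xs @ a # b # a # ys) = length (xs @ a # ys) + 2"
proof -
  show "successively R (xs @ a # b # a # ys)"
    using assms by (auto simp: successively_append_iff successively_Cons)
  show "cov (xs @ a # b # a # ys) = insert {a,b} (cov (xs @ a # ys))"
    using cov_append[of xs a "b#a#ys"] cov_append[of xs a ys] by (auto simp: insert_commute)
  show "set (xs @ a # b # a # ys) = insert b (set (xs @ a # ys))" by auto
  show "hd (xs @ a # b # a # ys) = hd (xs @ a # ys)" by (cases xs) auto
  show "last (xs @ a # b # a # ys) = last (xs @ a # ys)" by (cases ys) auto
qed simp

lemma cover_exists:
  assumes fin: "finite B" and uB: "u \<in> B" and sym: "\<forall>x y. (x,y)\<in>E \<longrightarrow> (y,x)\<in>E"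
  shows "\<exists>P n. successively (\<lambda>x y. (x,y)\<in>E) P \<and> hd P = u \<and> last P = u \<and> set P \<subseteq> B
     \<and> length P = 2*n+1 \<and> n \<le> card (cov P) \<and> (\<forall>a b. a\<in>set P \<longrightarrow> b\<in>B \<longrightarrow> (a,b)\<in>E \<longrightarrow> {a,b}\<in>cov P)"
proof -
  define D where "D = {{x,y}|x y. x\<in>B \<and> y\<in>B \<and> (x,y)\<in>E}"
  have finD: "finite D"
  proof -
    have "D \<subseteq> Pow B" unfolding D_def by auto
    then show ?thesis using fin by (meson finite_Pow_iff finite_subset)
  qed
  define inv where "inv P n \<longleftrightarrow> successively (\<lambda>x y. (x,y)\<in>E) P \<and> hd P = u \<and> last P = u \<and> set P \<subseteq> B
     \<and> length P = 2*n+1 \<and> n \<le> card (cov P)" for P n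
  define comp where "comp P \<longleftrightarrow> (\<forall>a b. a\<in>set P \<longrightarrow> b\<in>B \<longrightarrow> (a,b)\<in>E \<longrightarrow> {a,b}\<in>cov P)" for P
  have covD: "cov P \<subseteq> D" if Pinv: "inv P n" for P n
  proof
    fix e assume "e \<in> cov P"
    then obtain x y where "e = {x,y}" "x \<in> set P" "y \<in> set P" "(x,y)\<in>E"
      using cov_edge[of "\<lambda>x y. (x,y)\<in>E" P e] Pinv unfolding inv_def by blast
    then show "e \<in> D" using Pinv unfolding inv_def D_def by blast
  qed
  have main: "\<exists>P n. inv P n \<and> (comp P \<or> j \<le> card (cov P))" for j
  proof (induction j)
    case 0
    have "inv [u] 0" unfolding inv_def using uB by simp
    then show ?case by blast
  next
    case (Suc j)
    then obtain P n where P: "inv P n" and c: "comp P \<or> j \<le> card (cov P)" by blast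
    show ?case
    proof (cases "comp P")
      case True then show ?thesis using P by blast
    next
      case False
      then obtain a b where ab: "a \<in> set P" "b \<in> B" "(a,b)\<in>E" "{a,b} \<notin> cov P"
        unfolding comp_def by blast
      then obtain xs ys where Pe: "P = xs @ a # ys" by (meson split_list)
      have R: "successively (\<lambda>x y. (x,y)\<in>E) (xs @ a # ys)" using P Pe unfolding inv_def by simp
      note ib = insert_bounce[OF R ab(3) sym[rule_format, OF ab(3)]]
      let ?Q = "xs @ a # b # a # ys"
      have cQ: "card (cov ?Q) = Suc (card (cov P))"
        unfolding ib(2) Pe[symmetric] using ab(4) cov_finite[of P] by simp
      have "inv ?Q (Suc n)"
        unfolding inv_def
      proof (intro conjI)
        show "successively (\<lambda>x y. (x,y)\<in>E) ?Q" by (rule ib(1))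
        show "hd ?Q = u" using ib(4) P Pe unfolding inv_def by simp
        show "last ?Q = u" using ib(5) P Pe unfolding inv_def by simp
        show "set ?Q \<subseteq> B" using ib(3) P Pe ab(2) unfolding inv_def by simp
        show "length ?Q = 2 * Suc n + 1" using ib(6) P Pe unfolding inv_def by simp
        show "Suc n \<le> card (cov ?Q)" using cQ P unfolding inv_def by simp
      qed
      moreover have "Suc j \<le> card (cov ?Q)" using c False cQ by simp
      ultimately show ?thesis by blast
    qed
  qed
  obtain P n where P: "inv P n" and c: "comp P \<or> Suc (card D) \<le> card (cov P)"
    using main by blast
  have "card (cov P) \<le> card D" using covD[OF P] finD card_mono by blast
  then have "comp P" using c by simp
  then show ?thesis using P unfolding inv_def comp_def by blast
qed



lemma anon_key:
  fixes xs :: "'a list"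
  assumes "i < length xs" "j < length xs"
  shows "xs!i = xs!j \<longleftrightarrow> (anon_path xs)!i = (anon_path xs)!j"
proof -
  have ai: "(anon_path xs)!i = (LEAST k. xs!k = xs!i)" and aj: "(anon_path xs)!j = (LEAST k. xs!k = xs!j)"
    using assms unfolding anon_path_def by simp_all
  have li: "xs!(LEAST k. xs!k = xs!i) = xs!i" by (rule LeastI[of "\<lambda>k. xs!k = xs!i" i]) simp
  have lj: "xs!(LEAST k. xs!k = xs!j) = xs!j" by (rule LeastI[of "\<lambda>k. xs!k = xs!j" j]) simp
  show ?thesis unfolding ai aj using li lj by metis
qed

lemma anon_nth_iff:
  assumes "length w = length w'" "anon_path w = anon_path w'" "i < length w" "j < length w"
  shows "w!i = w!j \<longleftrightarrow> w'!i = w'!j"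
  using anon_key[of i w j] anon_key[of i w' j] assms by simp

lemma anon_map:
  assumes "length w = length w'" "anon_path w = anon_path w'"
  shows "\<exists>f. map f w = w' \<and> inj_on f (set w)"
proof -
  define f where "f x = w' ! (SOME i. i < length w \<and> w!i = x)" for x
  have fi: "f (w!i) = w'!i" if "i < length w" for i
  proof -
    have "\<exists>j. j < length w \<and> w!j = w!i" using that by blast
    then have s: "(SOME j. j < length w \<and> w!j = w!i) < length w \<and> w!(SOME j. j < length w \<and> w!j = w!i) = w!i"
      by (rule someI_ex)
    then show ?thesis unfolding f_def using anon_nth_iff[OF assms _ that] by blast
  qed
  have "map f w = w'" using fi assms(1) by (intro nth_equalityI) auto
  moreover have "inj_on f (set w)"
  proof (rule inj_onI)
    fix x y assume "x \<in> set w" "y \<in> set w" "f x = f y"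
    then obtain i j where "i < length w" "j < length w" "x = w!i" "y = w!j" "f x = f y"
      by (metis in_set_conv_nth)
    then show "x = y" using fi anon_nth_iff[OF assms] by metis
  qed
  ultimately show ?thesis by blast
qed

lemma degree_pos:
  assumes "finite V" "E \<subseteq> V \<times> V" "(x,y) \<in> E"
  shows "degree E x > 0"
proof -
  have "{y. (x,y)\<in>E} \<subseteq> V" using assms by auto
  then have "finite {y. (x,y)\<in>E}" using assms(1) finite_subset by blast
  moreover have "y \<in> {y. (x,y)\<in>E}" using assms by simp
  ultimately show ?thesis unfolding degree_def by (metis card_gt_0_iff empty_iff)
qed

lemma walk_prob_nonneg: "walk_prob E w \<ge> 0"
  unfolding walk_prob_def by (rule prod_nonneg) auto

lemma walk_prob_pos:
  assumes "finite V" "E \<subseteq> V \<times> V" "successively (\<lambda>x y. (x,y)\<in>E) w"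
  shows "walk_prob E w > 0"
  unfolding walk_prob_def
proof (rule prod_pos)
  fix i assume "i \<in> {..<length w - 1}"
  then have e: "(w!i, w!Suc i) \<in> E" using assms(3) unfolding succ_nth by auto
  then show "0 < (if (w!i, w!Suc i) \<in> E then 1 / real (degree E (w!i)) else 0)"
    using degree_pos[OF assms(1,2) e] by simp
qed

lemma walk_prob_pos_succ:
  assumes "walk_prob E w > 0"
  shows "successively (\<lambda>x y. (x,y)\<in>E) w"
  unfolding succ_nth
proof (intro allI impI, rule ccontr)
  fix i assume i: "Suc i < length w" and n: "(w!i, w!Suc i) \<notin> E"
  have "walk_prob E w = 0" unfolding walk_prob_def
  proof (rule prod_zero)
    show "\<exists>a\<in>{..<length w - 1}. (if (w!a, w!Suc a) \<in> E then 1 / real (degree E (w!a)) else 0) = 0"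
      using i n by (intro bexI[of _ i]) auto
  qed simp
  then show False using assms by simp
qed

lemma finite_walkset: "finite V \<Longrightarrow> finite {w. length w = Suc l \<and> set w \<subseteq> V \<and> hd w = v}"
  by (rule finite_subset[OF _ finite_lists_length_eq[of V "Suc l"]]) auto

lemma anon_dist_pos:
  assumes "finite V" "length w = Suc l" "set w \<subseteq> V" "hd w = v" "walk_prob E w > 0"
  shows "anon_dist V E v l (anon_path w) > 0"
proof -
  let ?S = "{w. length w = Suc l \<and> set w \<subseteq> V \<and> hd w = v}"
  let ?g = "\<lambda>w'. if anon_path w' = anon_path w then walk_prob E w' else 0"
  have "?g w \<le> sum ?g ?S"
    by (rule member_le_sum) (use assms finite_walkset[OF assms(1)] walk_prob_nonneg in auto)
  then show ?thesis unfolding anon_dist_def using assms(5) by simp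
qed

lemma anon_dist_pos_ex:
  assumes "anon_dist V E v l \<phi> > 0"
  shows "\<exists>w. length w = Suc l \<and> set w \<subseteq> V \<and> hd w = v \<and> anon_path w = \<phi> \<and> walk_prob E w > 0"
proof (rule ccontr)
  assume "\<not> ?thesis"
  then have "anon_dist V E v l \<phi> \<le> 0" unfolding anon_dist_def
    by (intro sum_nonpos) (auto simp: not_less)
  then show False using assms by simp
qed



lemma ego_walk:
  assumes sg: "simple_graph V E" and uV: "u \<in> V" and x: "x \<in> ego_nodes V E u k"
  shows "\<exists>q. successively (\<lambda>a b. (a,b)\<in>E) q \<and> q \<noteq> [] \<and> hd q = u \<and> last q = x
           \<and> set q \<subseteq> ego_nodes V E u k \<and> length q \<le> Suc k"
proof -
  obtain q where q: "is_walk E q" "hd q = u" "last q = x" "length q \<le> Suc k"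
    using x unfolding ego_nodes_def dist_le_def by blast
  have ne: "q \<noteq> []" using q(1) unfolding is_walk_def by simp
  have "q!i \<in> ego_nodes V E u k" if i: "i < length q" for i
  proof -
    have inV: "q!i \<in> V"
    proof (cases i)
      case 0 then show ?thesis using q(2) ne uV by (simp add: hd_conv_nth)
    next
      case (Suc j)
      then have "(q!j, q!i) \<in> E" using q(1) i unfolding is_walk_def by auto
      then show ?thesis using sg unfolding simple_graph_def by auto
    qed
    have "is_walk E (take (Suc i) q)" using q(1) i unfolding is_walk_def by auto
    moreover have "hd (take (Suc i) q) = u" using q(2) ne by simp
    moreover have "last (take (Suc i) q) = q!i" using i by (simp add: take_Suc_conv_app_nth)
    moreover have "length (take (Suc i) q) \<le> Suc k" using q(4) by simp
    ultimately have "dist_le E u (q!i) k" unfolding dist_le_def by blast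
    then show ?thesis using inV unfolding ego_nodes_def by simp
  qed
  then have "set q \<subseteq> ego_nodes V E u k" by (metis in_set_conv_nth subsetI)
  then show ?thesis using q ne is_walk_succ by blast
qed

lemma ego_from_walk:
  assumes "successively (\<lambda>a b. (a,b)\<in>E) q" "q \<noteq> []" "hd q = v" "last q = y" "set q \<subseteq> V" "length q \<le> Suc k"
  shows "y \<in> ego_nodes V E v k"
proof -
  have "y \<in> V" using assms(2,4,5) last_in_set by blast
  moreover have "dist_le E v y k" unfolding dist_le_def using assms is_walk_succ by blast
  ultimately show ?thesis unfolding ego_nodes_def by simp
qed

lemma u_in_ego: "u \<in> V \<Longrightarrow> u \<in> ego_nodes V E u k"
  unfolding ego_nodes_def dist_le_def is_walk_def by (auto intro!: exI[of _ "[u]"])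

lemma pad:
  assumes "successively (\<lambda>a b. (a,b)\<in>E) P" "hd P = u" "last P = u" "u \<in> set P" "(u,x)\<in>E" "(x,u)\<in>E"
    "{u,x} \<in> cov P" "x \<in> set P"
  shows "\<exists>Q. successively (\<lambda>a b. (a,b)\<in>E) Q \<and> hd Q = u \<and> set Q = set P \<and> cov Q = cov P
           \<and> length Q = length P + 2*j"
proof (induction j)
  case 0 then show ?case using assms by (intro exI[of _ P]) simp
next
  case (Suc j)
  then obtain Q where Q: "successively (\<lambda>a b. (a,b)\<in>E) Q" "hd Q = u" "set Q = set P" "cov Q = cov P"
    "length Q = length P + 2*j" by blast
  obtain xs ys where Qe: "Q = xs @ u # ys" using Q(3) assms(4) by (metis split_list)
  note ib = insert_bounce[OF Q(1)[unfolded Qe] assms(5,6)]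
  show ?case
    apply (rule exI[of _ "xs @ u # x # u # ys"])
    using ib Q assms(7,8) unfolding Qe[symmetric] by (auto simp: insert_absorb)
qed

lemma full_walk:
  assumes fin: "finite V" and sg: "simple_graph V E" and uV: "u \<in> V" and k: "k \<ge> 1"
    and ux: "(u,x) \<in> E" and M: "induced_edge_count E (ego_nodes V E u k) \<le> M"
  shows "\<exists>W. successively (\<lambda>a b. (a,b)\<in>E) W \<and> hd W = u \<and> set W = ego_nodes V E u k
     \<and> cov W = {{a,b}|a b. a \<in> ego_nodes V E u k \<and> b \<in> ego_nodes V E u k \<and> (a,b)\<in>E}
     \<and> length W = 2*M+1"
proof -
  define B where "B = ego_nodes V E u k"
  define D where "D = {{a,b}|a b. a \<in> B \<and> b \<in> B \<and> (a,b)\<in>E}"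
  have sym: "\<forall>a b. (a,b)\<in>E \<longrightarrow> (b,a)\<in>E" using sg unfolding simple_graph_def by blast
  have finB: "finite B" unfolding B_def ego_nodes_def using fin by simp
  have uB: "u \<in> B" unfolding B_def using u_in_ego[OF uV] .
  obtain P n where P: "successively (\<lambda>x y. (x,y)\<in>E) P" "hd P = u" "last P = u" "set P \<subseteq> B"
     "length P = 2*n+1" "n \<le> card (cov P)" and cmp: "\<forall>a b. a\<in>set P \<longrightarrow> b\<in>B \<longrightarrow> (a,b)\<in>E \<longrightarrow> {a,b}\<in>cov P"
    using cover_exists[OF finB uB sym] by blast
  have Pne: "P \<noteq> []" using P(5) by auto
  have sP: "set P = B"
  proof
    show "B \<subseteq> set P"
    proof
      fix y assume "y \<in> B"
      then obtain q where q: "successively (\<lambda>a b. (a,b)\<in>E) q" "q \<noteq> []" "hd q = u" "last q = y" "set q \<subseteq> B"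
        using ego_walk[OF sg uV] unfolding B_def by blast
      have "q!i \<in> set P" if "i < length q" for i
        using that
      proof (induction i)
        case 0 then show ?case using q(2,3) P(2) Pne by (metis hd_conv_nth hd_in_set)
      next
        case (Suc i)
        have e: "(q!i, q!Suc i) \<in> E" using q(1) Suc.prems unfolding succ_nth by blast
        have "q!Suc i \<in> B" using q(5) Suc.prems by (meson nth_mem subsetD)
        then have "{q!i, q!Suc i} \<in> cov P" using cmp Suc e by simp
        then obtain a b where "{q!i, q!Suc i} = {a,b}" "a \<in> set P" "b \<in> set P"
          using cov_edge[OF P(1)] by blast
        then show ?case by (metis doubleton_eq_iff)
      qed
      then show "y \<in> set P" using q(2,4) by (metis last_conv_nth diff_less length_greater_0_conv zero_less_one)
    qed
  qed (rule P(4))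
  have cP: "cov P = D"
  proof
    show "cov P \<subseteq> D"
    proof
      fix e assume "e \<in> cov P"
      then obtain a b where "e = {a,b}" "a \<in> set P" "b \<in> set P" "(a,b)\<in>E" using cov_edge[OF P(1)] by blast
      then show "e \<in> D" unfolding D_def sP by blast
    qed
    show "D \<subseteq> cov P" unfolding D_def using cmp sP by blast
  qed
  have "n \<le> M" using P(6) M unfolding cP D_def B_def induced_edge_count_def by simp
  have xB: "x \<in> B"
  proof -
    have "successively (\<lambda>a b. (a,b)\<in>E) [u,x]" using ux by simp
    moreover have "set [u,x] \<subseteq> V" using ux sg uV unfolding simple_graph_def by auto
    ultimately show ?thesis unfolding B_def using ego_from_walk[of E "[u,x]" u x V k] k by simp
  qed
  have "{u,x} \<in> cov P" unfolding cP D_def using uB xB ux by blast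
  note ue = this
  have uP: "u \<in> set P" using sP uB by simp
  have xP: "x \<in> set P" using sP xB by simp
  from pad[OF P(1,2,3) uP ux sym[rule_format, OF ux] ue xP, of "M-n"]
  obtain Q where Q: "successively (\<lambda>a b. (a,b)\<in>E) Q" "hd Q = u" "set Q = set P" "cov Q = cov P"
           "length Q = length P + 2*(M-n)" by (elim exE conjE)
  have lQ: "length Q = 2*M+1" using Q(5) P(5) \<open>n \<le> M\<close> by simp
  have sQ: "set Q = B" using Q(3) sP by simp
  have cQ: "cov Q = D" using Q(4) cP by simp
  show ?thesis
    apply (rule exI[of _ Q])
    unfolding B_def[symmetric] D_def[symmetric]
    using Q(1,2) sQ cQ lQ by (intro conjI)
qed



lemma embed:
  assumes sg: "simple_graph V E" and len: "length w = length w'" and an: "anon_path w = anon_path w'"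
    and wne: "w \<noteq> []" and hw: "hd w = u" and uV: "u \<in> V"
    and sw: "set w = ego_nodes V E u k"
    and cw: "cov w = {{a,b}|a b. a \<in> ego_nodes V E u k \<and> b \<in> ego_nodes V E u k \<and> (a,b)\<in>E}"
    and w'E: "successively (\<lambda>a b. (a,b)\<in>E) w'" and sw': "set w' \<subseteq> V" and hw': "hd w' = v"
  shows "\<exists>f. inj_on f (ego_nodes V E u k) \<and> f ` ego_nodes V E u k \<subseteq> ego_nodes V E v k \<and> f u = v
     \<and> (\<forall>a\<in>ego_nodes V E u k. \<forall>b\<in>ego_nodes V E u k. (a,b)\<in>E \<longrightarrow> (f a, f b)\<in>E)"
proof -
  have sym: "\<And>a b. (a,b)\<in>E \<Longrightarrow> (b,a)\<in>E" using sg unfolding simple_graph_def by blast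
  obtain f where mf: "map f w = w'" and inj: "inj_on f (set w)" using anon_map[OF len an] by blast
  have fu: "f u = v" using mf wne hw hw' by (metis hd_map)
  have edges: "(f a, f b) \<in> E" if ab: "a \<in> ego_nodes V E u k" "b \<in> ego_nodes V E u k" "(a,b)\<in>E" for a b
  proof -
    have "{a,b} \<in> cov w" using cw ab by blast
    then have "f ` {a,b} \<in> (\<lambda>e. f ` e) ` cov w" by (rule imageI)
    then have "f ` {a,b} \<in> cov w'" using cov_map[of f w] mf by simp
    then have "{f a, f b} \<in> cov w'" by simp
    then obtain x y where "{f a, f b} = {x,y}" "(x,y)\<in>E" using cov_edge[OF w'E] by blast
    then show ?thesis using sym by (metis doubleton_eq_iff)
  qed
  have img: "f y \<in> ego_nodes V E v k" if y: "y \<in> ego_nodes V E u k" for y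
  proof -
    obtain q where q: "successively (\<lambda>a b. (a,b)\<in>E) q" "q \<noteq> []" "hd q = u" "last q = y"
           "set q \<subseteq> ego_nodes V E u k" "length q \<le> Suc k"
      using ego_walk[OF sg uV y] by blast
    have "successively (\<lambda>a b. (f a, f b)\<in>E) q"
      using q(1) by (rule successively_mono) (use q(5) edges in blast)
    then have s1: "successively (\<lambda>a b. (a,b)\<in>E) (map f q)" by (simp add: successively_map)
    have "set (map f q) \<subseteq> set w'" using q(5) sw mf by auto
    then have s2: "set (map f q) \<subseteq> V" using sw' by blast
    show ?thesis
      by (rule ego_from_walk[OF s1 _ _ _ s2]) (use q fu in \<open>auto simp: hd_map last_map\<close>)
  qed
  show ?thesis using inj sw fu img edges by (intro exI[of _ f]) auto
qed

lemma iso_from_embeds: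
  assumes finA: "finite A" and finB: "finite B" and sym: "\<And>x y. (x,y)\<in>E \<Longrightarrow> (y,x)\<in>E"
    and fi: "inj_on f A" and fA: "f ` A \<subseteq> B" and fa: "f a = b"
    and fe: "\<forall>x\<in>A. \<forall>y\<in>A. (x,y)\<in>E \<longrightarrow> (f x, f y)\<in>E"
    and gi: "inj_on g B" and gB: "g ` B \<subseteq> A"
    and ge: "\<forall>x\<in>B. \<forall>y\<in>B. (x,y)\<in>E \<longrightarrow> (g x, g y)\<in>E"
  shows "rooted_iso E A a B b"
proof -
  have c1: "card A \<le> card B" using card_inj_on_le[OF fi fA finB] .
  have c2: "card B \<le> card A" using card_inj_on_le[OF gi gB finA] .
  have fAB: "f ` A = B"
    using card_subset_eq[OF finB fA] card_image[OF fi] c1 c2 by simp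
  define DA where "DA = {{x,y}|x y. x\<in>A \<and> y\<in>A \<and> (x,y)\<in>E}"
  define DB where "DB = {{x,y}|x y. x\<in>B \<and> y\<in>B \<and> (x,y)\<in>E}"
  have DAP: "DA \<subseteq> Pow A" and DBP: "DB \<subseteq> Pow B" unfolding DA_def DB_def by auto
  have finDA: "finite DA" using DAP finA by (meson finite_Pow_iff finite_subset)
  have finDB: "finite DB" using DBP finB by (meson finite_Pow_iff finite_subset)
  have fD: "image f ` DA \<subseteq> DB"
  proof
    fix e assume "e \<in> image f ` DA"
    then obtain x y where "e = {f x, f y}" "x\<in>A" "y\<in>A" "(x,y)\<in>E" unfolding DA_def by auto
    then show "e \<in> DB" unfolding DB_def using fA fe by blast
  qed
  have gD: "image g ` DB \<subseteq> DA"
  proof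
    fix e assume "e \<in> image g ` DB"
    then obtain x y where "e = {g x, g y}" "x\<in>B" "y\<in>B" "(x,y)\<in>E" unfolding DB_def by auto
    then show "e \<in> DA" unfolding DA_def using gB ge by blast
  qed
  have fDi: "inj_on (image f) DA" using inj_on_subset[OF inj_on_image_Pow[OF fi] DAP] .
  have gDi: "inj_on (image g) DB" using inj_on_subset[OF inj_on_image_Pow[OF gi] DBP] .
  have d1: "card DA \<le> card DB" using card_inj_on_le[OF fDi fD finDB] .
  have d2: "card DB \<le> card DA" using card_inj_on_le[OF gDi gD finDA] .
  have fDB: "image f ` DA = DB"
    using card_subset_eq[OF finDB fD] card_image[OF fDi] d1 d2 by simp
  have "(x,y)\<in>E" if xy: "x\<in>A" "y\<in>A" "(f x, f y)\<in>E" for x y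
  proof -
    have "f x \<in> B" "f y \<in> B" using xy fA by auto
    then have "{f x, f y} \<in> DB" unfolding DB_def using xy by blast
    then obtain e where e: "e \<in> DA" "f ` e = {f x, f y}" using fDB by (metis imageE)
    then obtain p q where pq: "e = {p,q}" "p\<in>A" "q\<in>A" "(p,q)\<in>E" unfolding DA_def by blast
    have "f ` {p,q} = f ` {x,y}" using e pq by simp
    then have "{p,q} = {x,y}" using inj_on_image_eq_iff[OF fi, of "{p,q}" "{x,y}"] pq xy by simp
    then show ?thesis using pq sym by (metis doubleton_eq_iff)
  qed
  then have "\<forall>x\<in>A. \<forall>y\<in>A. (x,y)\<in>E \<longleftrightarrow> (f x, f y)\<in>E" using fe by blast
  moreover have "bij_betw f A B" unfolding bij_betw_def using fi fAB by simp
  ultimately show ?thesis unfolding rooted_iso_def using fa by blast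
qed



lemma half:
  assumes fin: "finite V" and sg: "simple_graph V E" and aV: "a \<in> V"
    and W: "successively (\<lambda>x y. (x,y)\<in>E) W" "hd W = a" "set W = ego_nodes V E a k"
      "cov W = {{x,y}|x y. x \<in> ego_nodes V E a k \<and> y \<in> ego_nodes V E a k \<and> (x,y)\<in>E}"
      "length W = Suc l"
    and eq: "anon_dist V E a l = anon_dist V E b l"
  shows "\<exists>f. inj_on f (ego_nodes V E a k) \<and> f ` ego_nodes V E a k \<subseteq> ego_nodes V E b k \<and> f a = b
     \<and> (\<forall>x\<in>ego_nodes V E a k. \<forall>y\<in>ego_nodes V E a k. (x,y)\<in>E \<longrightarrow> (f x, f y)\<in>E)"
proof -
  have EV: "E \<subseteq> V \<times> V" using sg unfolding simple_graph_def by blast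
  have sWV: "set W \<subseteq> V" using W(3) unfolding ego_nodes_def by auto
  have wp: "walk_prob E W > 0" using walk_prob_pos[OF fin EV W(1)] .
  have "anon_dist V E a l (anon_path W) > 0" using anon_dist_pos[OF fin W(5) sWV W(2) wp] .
  then have "anon_dist V E b l (anon_path W) > 0" using eq by simp
  from anon_dist_pos_ex[OF this] obtain w' where w': "length w' = Suc l" "set w' \<subseteq> V" "hd w' = b" "anon_path w' = anon_path W"
    "walk_prob E w' > 0" by (elim exE conjE)
  have sw': "successively (\<lambda>x y. (x,y)\<in>E) w'" using walk_prob_pos_succ[OF w'(5)] .
  have Wne: "W \<noteq> []" using W(5) by auto
  show ?thesis
    using embed[OF sg _ _ Wne W(2) aV W(3) W(4) sw' w'(2) w'(3)] w'(1,4) W(5) by simp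
qed

lemma nbr:
  assumes "connected_graph V E" "u \<in> V" "v \<in> V" "u \<noteq> v"
  shows "\<exists>x. (u,x)\<in>E"
proof -
  obtain w where w: "is_walk E w" "hd w = u" "last w = v" using assms unfolding connected_graph_def by blast
  have ne: "w \<noteq> []" using w(1) unfolding is_walk_def by simp
  have "length w \<noteq> 1"
  proof
    assume "length w = 1"
    then obtain z where "w = [z]" by (metis One_nat_def length_0_conv length_Suc_conv)
    then show False using w assms(4) by simp
  qed
  then have "Suc 0 < length w" using ne by (cases w) auto
  then have "(w!0, w!Suc 0) \<in> E" using w(1) unfolding is_walk_def by blast
  moreover have "w!0 = u" using w(2) ne by (simp add: hd_conv_nth)
  ultimately show ?thesis by blast
qed

theorem proposition1:
  shows "\<exists>C::nat. \<forall>(V::nat set) (E::(nat \<times> nat) set) u v (k::nat).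
    finite V \<and> simple_graph V E \<and> connected_graph V E \<and> u \<in> V \<and> v \<in> V \<and> k \<ge> 1 \<and>
    \<not> rooted_iso E (ego_nodes V E u k) u (ego_nodes V E v k) v \<longrightarrow>
    (\<exists>l::nat. l \<le> C * max (induced_edge_count E (ego_nodes V E u k))
                             (induced_edge_count E (ego_nodes V E v k)) \<and>
              anon_dist V E u l \<noteq> anon_dist V E v l)"
proof (rule exI[of _ 2], intro allI impI)
  fix V :: "nat set" and E :: "(nat \<times> nat) set" and u v :: nat and k :: nat
  assume H: "finite V \<and> simple_graph V E \<and> connected_graph V E \<and> u \<in> V \<and> v \<in> V \<and> k \<ge> 1 \<and>
    \<not> rooted_iso E (ego_nodes V E u k) u (ego_nodes V E v k) v"
  then have fin: "finite V" and sg: "simple_graph V E" and conn: "connected_graph V E"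
    and uV: "u \<in> V" and vV: "v \<in> V" and k1: "k \<ge> 1"
    and niso: "\<not> rooted_iso E (ego_nodes V E u k) u (ego_nodes V E v k) v" by auto
  have sym: "\<And>x y. (x,y)\<in>E \<Longrightarrow> (y,x)\<in>E" using sg unfolding simple_graph_def by blast
  have uv: "u \<noteq> v"
  proof
    assume "u = v"
    then have "rooted_iso E (ego_nodes V E u k) u (ego_nodes V E v k) v"
      unfolding rooted_iso_def by (intro exI[of _ id]) auto
    then show False using niso by blast
  qed
  obtain xu where xu: "(u,xu)\<in>E" using nbr[OF conn uV vV uv] by blast
  obtain xv where xv: "(v,xv)\<in>E" using nbr[OF conn vV uV] uv by metis
  define M where "M = max (induced_edge_count E (ego_nodes V E u k)) (induced_edge_count E (ego_nodes V E v k))"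
  have Mu: "induced_edge_count E (ego_nodes V E u k) \<le> M" unfolding M_def by simp
  have Mv: "induced_edge_count E (ego_nodes V E v k) \<le> M" unfolding M_def by simp
  from full_walk[OF fin sg uV k1 xu Mu]
  obtain Wu where Wu: "successively (\<lambda>a b. (a,b)\<in>E) Wu" "hd Wu = u" "set Wu = ego_nodes V E u k"
     "cov Wu = {{a,b}|a b. a \<in> ego_nodes V E u k \<and> b \<in> ego_nodes V E u k \<and> (a,b)\<in>E}"
     "length Wu = 2*M+1"
    by (elim exE conjE)
  from full_walk[OF fin sg vV k1 xv Mv]
  obtain Wv where Wv: "successively (\<lambda>a b. (a,b)\<in>E) Wv" "hd Wv = v" "set Wv = ego_nodes V E v k"
     "cov Wv = {{a,b}|a b. a \<in> ego_nodes V E v k \<and> b \<in> ego_nodes V E v k \<and> (a,b)\<in>E}"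
     "length Wv = 2*M+1"
    by (elim exE conjE)
  show "\<exists>l. l \<le> 2 * max (induced_edge_count E (ego_nodes V E u k)) (induced_edge_count E (ego_nodes V E v k))
           \<and> anon_dist V E u l \<noteq> anon_dist V E v l"
  proof (intro exI[of _ "2*M"] conjI notI)
    show "2*M \<le> 2 * max (induced_edge_count E (ego_nodes V E u k)) (induced_edge_count E (ego_nodes V E v k))"
      unfolding M_def by simp
  next
    assume eq: "anon_dist V E u (2*M) = anon_dist V E v (2*M)"
    have lu: "length Wu = Suc (2*M)" and lv: "length Wv = Suc (2*M)" using Wu(5) Wv(5) by simp_all
    from half[OF fin sg uV Wu(1-4) lu eq]
    obtain f where f: "inj_on f (ego_nodes V E u k)" "f ` ego_nodes V E u k \<subseteq> ego_nodes V E v k" "f u = v"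
      "\<forall>x\<in>ego_nodes V E u k. \<forall>y\<in>ego_nodes V E u k. (x,y)\<in>E \<longrightarrow> (f x, f y)\<in>E"
      by (elim exE conjE)
    from half[OF fin sg vV Wv(1-4) lv eq[symmetric]]
    obtain g where g: "inj_on g (ego_nodes V E v k)" "g ` ego_nodes V E v k \<subseteq> ego_nodes V E u k" "g v = u"
      "\<forall>x\<in>ego_nodes V E v k. \<forall>y\<in>ego_nodes V E v k. (x,y)\<in>E \<longrightarrow> (g x, g y)\<in>E"
      by (elim exE conjE)
    have finU: "finite (ego_nodes V E u k)" and finV: "finite (ego_nodes V E v k)"
      using fin unfolding ego_nodes_def by auto
    have "rooted_iso E (ego_nodes V E u k) u (ego_nodes V E v k) v"
      by (rule iso_from_embeds[OF finU finV sym f g(1,2,4)])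
    then show False using niso by blast
  qed
qed

end
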